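(* Let $N\in\mathbb{N}$, $N\geqslant2$, and let $f:[0,1]\times\mathbb{R}\to\mathbb{R}$ be such that there exist positive constants $A,B$ with $A<1$ and $|f(t,x)|\leqslant A|x|+B$ for all $t\in[0,1]$, $x\in\mathbb{R}$. Then the functional $\mathbb{E}_N\ni x\mapsto\|D_Nx\|_N$ is coercive with respect to $\|\cdot\|_{\mathbb{E}_N}$, i.e. $\|D_Nx\|_N\to\infty$ as $\|x\|_{\mathbb{E}_N}\to\infty$.
   Context: $\mathbb{E}_N$ is the space of $x:\{0,\dots,N\}\to\mathbb{R}$ with $x(0)=x(N)=0$. $\Delta x(k-1)=x(k)-x(k-1)$, $\Delta^2x(k-1)=x(k+1)-2x(k)+x(k-1)$. $\|x\|_N=(\sum_{i=1}^{N-1}|x(i)|^2)^{1/2}$, $\|x\|_{\mathbb{E}_N}=(\sum_{i=1}^{N-1}|\Delta^2x(i-1)|^2)^{1/2}$. $(D_Nx)(k)=\Delta^2x(k-1)-\frac{1}{N^2}f(\frac kN,x(k))$ for $k=1,\dots,N-1$, $(D_Nx)(0)=(D_Nx)(N)=0$. *)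

theory Defs
  imports "HOL-Analysis.Analysis"
begin

text \<open>The space E_N: functions on {0..N} (represented as nat => real; values
  outside {0..N} are irrelevant) vanishing at 0 and N.\<close>
definition EN :: "nat \<Rightarrow> (nat \<Rightarrow> real) set" where
  "EN N = {x. x 0 = 0 \<and> x N = 0}"

text \<open>Second difference: diff2 x (k-1) = x(k+1) - 2 x(k) + x(k-1); we index by k.\<close>
definition diff2 :: "(nat \<Rightarrow> real) \<Rightarrow> nat \<Rightarrow> real" where
  "diff2 x k = x (k + 1) - 2 * x k + x (k - 1)"

definition normN :: "nat \<Rightarrow> (nat \<Rightarrow> real) \<Rightarrow> real" where
  "normN N x = sqrt (\<Sum>i = 1..N - 1. (x i)\<^sup>2)"

definition normEN :: "nat \<Rightarrow> (nat \<Rightarrow> real) \<Rightarrow> real" where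
  "normEN N x = sqrt (\<Sum>i = 1..N - 1. (diff2 x i)\<^sup>2)"

definition DN :: "nat \<Rightarrow> (real \<Rightarrow> real \<Rightarrow> real) \<Rightarrow> (nat \<Rightarrow> real) \<Rightarrow> nat \<Rightarrow> real" where
  "DN N f x k = (if 1 \<le> k \<and> k \<le> N - 1
      then diff2 x k - 1 / (real N)\<^sup>2 * f (real k / real N) (x k) else 0)"

end

theory Submission imports Defs "HOL-Analysis.Analysis" begin

lemma tel: "(\<Sum>j=1..(n::nat). x j - x (j-1)) = x n - (x 0::real)"
  by (induction n) auto

lemma tel2:
  fixes x :: "nat \<Rightarrow> real"
  assumes "1 \<le> j" "j \<le> k"
  shows "(x k - x (k-1)) - (x j - x (j-1)) = (\<Sum>i\<in>{j..<k}. diff2 x i)"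
  using assms(2)
proof (induct k rule: dec_induct)
  case base then show ?case by simp
next
  case (step k)
  have "diff2 x k = (x (Suc k) - x k) - (x k - x (k-1))" unfolding diff2_def by simp
  then show ?case using step by simp
qed

lemma xbound:
  fixes x :: "nat \<Rightarrow> real"
  assumes "N \<ge> 2" "x 0 = 0" "x N = 0" "k \<in> {1..N-1}"
  shows "\<bar>x k\<bar> \<le> real N * (\<Sum>i=1..N-1. \<bar>diff2 x i\<bar>)"
proof -
  define S where "S = (\<Sum>i=1..N-1. \<bar>diff2 x i\<bar>)"
  define d where "d j = x j - x (j-1)" for j
  have S0: "S \<ge> 0" unfolding S_def by (simp add: sum_nonneg)
  have dd: "\<bar>d k' - d j\<bar> \<le> S" if "k' \<in> {1..N}" "j \<in> {1..N}" for k' j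
  proof -
    have gen: "\<bar>d b - d a\<bar> \<le> S" if "1 \<le> a" "a \<le> b" "b \<le> N" for a b
    proof -
      have "\<bar>d b - d a\<bar> = \<bar>\<Sum>i\<in>{a..<b}. diff2 x i\<bar>" using tel2[OF that(1,2), of x] d_def by simp
      also have "\<dots> \<le> (\<Sum>i\<in>{a..<b}. \<bar>diff2 x i\<bar>)" by (rule sum_abs)
      also have "\<dots> \<le> S" unfolding S_def
        by (rule sum_mono2) (use that in auto)
      finally show ?thesis .
    qed
    show ?thesis
    proof (cases "j \<le> k'")
      case True then show ?thesis using gen that by auto
    next
      case False then show ?thesis using gen[of k' j] that by auto
    qed
  qed
  have dsum: "(\<Sum>j=1..N. d j) = 0" unfolding d_def using tel[where n=N and x=x] assms by simp
  have dk: "\<bar>d i\<bar> \<le> S" if "i \<in> {1..N}" for i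
  proof -
    have "real N * d i = (\<Sum>j=1..N. d i - d j)" using dsum by (simp add: sum_subtractf)
    also have "\<bar>\<dots>\<bar> \<le> (\<Sum>j=1..N. \<bar>d i - d j\<bar>)" by (rule sum_abs)
    also have "\<dots> \<le> (\<Sum>j=1..N. S)" by (rule sum_mono) (use dd that in auto)
    also have "\<dots> = real N * S" by simp
    finally have "real N * \<bar>d i\<bar> \<le> real N * S" by (simp add: abs_mult)
    then show ?thesis using assms(1) by simp
  qed
  have "x k = (\<Sum>j=1..k. d j)" unfolding d_def using tel[where n=k and x=x] assms by simp
  then have "\<bar>x k\<bar> \<le> (\<Sum>j=1..k. \<bar>d j\<bar>)" by (simp add: sum_abs)
  also have "\<dots> \<le> (\<Sum>j=1..k. S)" by (rule sum_mono) (use dk assms in auto)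
  also have "\<dots> = real k * S" by simp
  also have "\<dots> \<le> real N * S" using assms S0 by (intro mult_right_mono) auto
  finally show ?thesis unfolding S_def .
qed

lemma L2_set_mono_abs:
  assumes "\<And>i. i \<in> K \<Longrightarrow> \<bar>f i\<bar> \<le> g i"
  shows "L2_set f K \<le> L2_set g K"
proof -
  have "L2_set f K = L2_set (\<lambda>i. \<bar>f i\<bar>) K" unfolding L2_set_def by simp
  also have "\<dots> \<le> L2_set g K" by (rule L2_set_mono) (use assms in auto)
  finally show ?thesis .
qed

theorem lemma11:
  fixes N :: nat and f :: "real \<Rightarrow> real \<Rightarrow> real" and A B :: real
  assumes "N \<ge> 2"
    and "A > 0" and "B > 0" and "A < 1"
    and "\<And>t x. t \<in> {0..1} \<Longrightarrow> \<bar>f t x\<bar> \<le> A * \<bar>x\<bar> + B"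
  shows "\<forall>M. \<exists>R. \<forall>x \<in> EN N. normEN N x > R \<longrightarrow> normN N (DN N f x) > M"
proof
  fix M :: real
  define I where "I = {1..N-1}"
  have cardI: "card I = N - 1" unfolding I_def by simp
  have N0: "real N > 0" using assms(1) by simp
  define c where "c = 1 - A * (real N - 1) / real N"
  define C where "C = B * sqrt (real N - 1) / (real N)^2"
  have "A * real N < 1 * real N" using assms(4) N0 by (intro mult_strict_right_mono) auto
  then have "A * (real N - 1) < real N" using assms(2) by (simp add: algebra_simps)
  then have "A * (real N - 1) / real N < 1" using N0 by (simp add: divide_less_eq)
  then have c0: "c > 0" unfolding c_def by simp
  define R where "R = (\<bar>M\<bar> + C) / c"
  show "\<exists>R. \<forall>x \<in> EN N. normEN N x > R \<longrightarrow> normN N (DN N f x) > M"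
  proof (intro exI ballI impI)
    fix x assume xE: "x \<in> EN N" and big: "normEN N x > R"
    have x0: "x 0 = 0" "x N = 0" using xE unfolding EN_def by auto
    define a where "a i = diff2 x i" for i
    define g where "g i = 1 / (real N)^2 * f (real i / real N) (x i)" for i
    have nE: "normEN N x = L2_set a I" unfolding normEN_def L2_set_def a_def I_def by simp
    have nD: "normN N (DN N f x) = L2_set (\<lambda>i. a i - g i) I"
      unfolding normN_def L2_set_def I_def
      by (intro arg_cong[where f=sqrt] sum.cong) (auto simp: DN_def a_def g_def)
    have ny: "L2_set x I \<le> (real N - 1) * real N * L2_set a I"
    proof -
      define S where "S = (\<Sum>i\<in>I. \<bar>a i\<bar>)"
      have S0: "S \<ge> 0" unfolding S_def by (simp add: sum_nonneg)
      have "S \<le> L2_set a I * L2_set (\<lambda>i. 1) I"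
        using L2_set_mult_ineq[of a "\<lambda>i. 1" I] unfolding S_def by simp
      also have "L2_set (\<lambda>i. 1) I = sqrt (real N - 1)"
        using cardI assms(1) by (simp add: L2_set_constant of_nat_diff)
      finally have SS: "S \<le> L2_set a I * sqrt (real N - 1)" .
      have "L2_set x I \<le> L2_set (\<lambda>i. real N * S) I"
        by (rule L2_set_mono_abs) (use xbound[OF assms(1) x0] in \<open>auto simp: S_def a_def I_def\<close>)
      also have "\<dots> = sqrt (real N - 1) * (real N * S)"
        using cardI assms(1) S0 by (simp add: L2_set_constant of_nat_diff)
      also have "\<dots> \<le> sqrt (real N - 1) * (real N * (L2_set a I * sqrt (real N - 1)))"
        using SS N0 by (intro mult_left_mono) auto
      also have "\<dots> = (real N - 1) * real N * L2_set a I"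
        using assms(1) by (simp add: algebra_simps)
      finally show ?thesis .
    qed
    have ng: "L2_set g I \<le> (A * L2_set x I + B * sqrt (real N - 1)) / (real N)^2"
    proof -
      have "L2_set g I \<le> L2_set (\<lambda>i. (A * \<bar>x i\<bar> + B) / (real N)^2) I"
      proof (rule L2_set_mono_abs)
        fix i assume "i \<in> I"
        then have "real i / real N \<in> {0..1}" using N0 unfolding I_def by (auto simp: field_simps)
        from assms(5)[OF this, of "x i"] show "\<bar>g i\<bar> \<le> (A * \<bar>x i\<bar> + B) / (real N)^2"
          unfolding g_def by (simp add: abs_mult divide_right_mono)
      qed
      also have "\<dots> = L2_set (\<lambda>i. A * \<bar>x i\<bar> + B) I / (real N)^2"
        using L2_set_left_distrib[of "1/(real N)^2" "\<lambda>i. A * \<bar>x i\<bar> + B" I]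
        by (simp add: divide_inverse)
      also have "L2_set (\<lambda>i. A * \<bar>x i\<bar> + B) I \<le> L2_set (\<lambda>i. A * \<bar>x i\<bar>) I + L2_set (\<lambda>i. B) I"
        by (rule L2_set_triangle_ineq)
      also have "L2_set (\<lambda>i. A * \<bar>x i\<bar>) I = A * L2_set x I"
        using L2_set_right_distrib[of A "\<lambda>i. \<bar>x i\<bar>" I] assms(2)
        by (simp add: L2_set_def)
      also have "L2_set (\<lambda>i. B) I = B * sqrt (real N - 1)"
        using cardI assms(1,3) by (simp add: L2_set_constant of_nat_diff)
      finally show ?thesis using N0 by (simp add: divide_right_mono)
    qed
    have tri: "L2_set a I \<le> L2_set (\<lambda>i. a i - g i) I + L2_set g I"
      using L2_set_triangle_ineq[of "\<lambda>i. a i - g i" g I] by simp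
    have "A * L2_set x I / (real N)^2 \<le> A * ((real N - 1) * real N * L2_set a I) / (real N)^2"
      using ny assms(2) N0 by (intro divide_right_mono mult_left_mono) auto
    also have "\<dots> = (1 - c) * L2_set a I" unfolding c_def using N0 by (simp add: field_simps power2_eq_square)
    finally have "L2_set g I \<le> (1 - c) * L2_set a I + C"
      using ng unfolding C_def by (simp add: add_divide_distrib)
    with tri have "c * L2_set a I - C \<le> L2_set (\<lambda>i. a i - g i) I" by (simp add: algebra_simps)
    moreover have "c * L2_set a I > \<bar>M\<bar> + C"
      using big c0 unfolding nE R_def by (simp add: field_simps)
    ultimately show "normN N (DN N f x) > M" unfolding nD by linarith
  qed
qed

end
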